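(* Let $\mathcal C=\{c_1,\ldots,c_m\}$ and $n\ge 1$. Suppose the manipulator has no information, i.e. the information set is $E=\mathcal F_n$, the set of all $n$-profiles of linear orders on $\mathcal C$. Then the Borda rule (with ties broken in the order $c_1\succ c_2\succ\cdots\succ c_m$) is immune to dominating manipulation: for every linear order $V_M$ on $\mathcal C$, no linear order $U$ on $\mathcal C$ dominates $V_M$.
   Context: Borda: each vote gives $m-i$ points to the alternative in its $i$-th position; the alternative with the highest total score wins, ties broken in favor of the alternative with the smallest index. There are $n$ non-manipulators and one manipulator with true preferences $V_M$ (a linear order). Given an information set $E$ (a set of $n$-profiles of the non-manipulators), a vote $U$ dominates a vote $V$ if for every $P\in E$, $r(P\cup\{U\})$ is ranked weakly above $r(P\cup\{V\})$ in $V_M$, and for some $P'\in E$, $r(P'\cup\{U\})$ is ranked strictly above $r(P'\cup\{V\})$ in $V_M$. Immunity means that for every $V_M$ no vote dominates $V_M$. *)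

theory Defs
  imports Main
begin

text \<open>Candidates c_1,...,c_m are encoded as the naturals 0,...,m-1 (c_{i+1} is i).
A vote (linear order on the candidates) is a list listing all candidates exactly once,
most preferred first.\<close>

definition linorder_vote :: "nat \<Rightarrow> nat list \<Rightarrow> bool" where
  "linorder_vote m v \<longleftrightarrow> distinct v \<and> set v = {0..<m}"

fun pos :: "nat list \<Rightarrow> nat \<Rightarrow> nat" where
  "pos [] c = 0"
| "pos (x # xs) c = (if x = c then 0 else Suc (pos xs c))"

text \<open>Borda: the candidate in (0-based) position i receives m-1-i points,
i.e. m-i points for 1-based position i.\<close>
definition borda_score :: "nat \<Rightarrow> nat list list \<Rightarrow> nat \<Rightarrow> nat" where
  "borda_score m P c = (\<Sum>v\<leftarrow>P. m - 1 - pos v c)"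

definition borda_winner :: "nat \<Rightarrow> nat list list \<Rightarrow> nat" where
  "borda_winner m P =
     (LEAST c. c < m \<and> (\<forall>d<m. borda_score m P d \<le> borda_score m P c))"

definition all_profiles :: "nat \<Rightarrow> nat \<Rightarrow> nat list list set" where
  "all_profiles m n = {P. length P = n \<and> (\<forall>v\<in>set P. linorder_vote m v)}"

text \<open>U dominates V for a manipulator with true preference VM and information set E.
r(P \<union> {U}) is the winner on the (n+1)-profile U # P; "ranked weakly above in VM"
means having smaller-or-equal position in VM.\<close>
definition dominates ::
  "nat \<Rightarrow> nat list list set \<Rightarrow> nat list \<Rightarrow> nat list \<Rightarrow> nat list \<Rightarrow> bool" where
  "dominates m E VM U V \<longleftrightarrow>
     (\<forall>P\<in>E. pos VM (borda_winner m (U # P)) \<le> pos VM (borda_winner m (V # P))) \<and>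
     (\<exists>P\<in>E. pos VM (borda_winner m (U # P)) < pos VM (borda_winner m (V # P)))"

end

theory Submission imports Defs begin

lemma pos_append: "pos (xs @ ys) c = (if c \<in> set xs then pos xs c else length xs + pos ys c)"
  by (induction xs) auto

lemma pos_less: "c \<in> set xs \<Longrightarrow> pos xs c < length xs"
  by (induction xs) auto

lemma pos_nth: "c \<in> set xs \<Longrightarrow> xs ! pos xs c = c"
  by (induction xs) auto

lemma nth_pos: "distinct xs \<Longrightarrow> i < length xs \<Longrightarrow> pos xs (xs ! i) = i"
proof (induction xs arbitrary: i)
  case Nil then show ?case by simp
next
  case (Cons x xs) then show ?case
    by (cases i) (auto simp: nth_mem)
qed

lemma pos_rev: assumes "distinct xs" "c \<in> set xs"
  shows "pos (rev xs) c = length xs - 1 - pos xs c"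
proof -
  define i where "i = pos xs c"
  have i: "i < length xs" "xs ! i = c" using assms pos_less pos_nth i_def by auto
  have "rev xs ! (length xs - 1 - i) = c" using i by (simp add: rev_nth Suc_diff_Suc)
  then have "pos (rev xs) (rev xs ! (length xs - 1 - i)) = length xs - 1 - i"
    using i assms by (intro nth_pos) auto
  then show ?thesis using \<open>rev xs ! (length xs - 1 - i) = c\<close> i_def by simp
qed

definition tot :: "nat list list \<Rightarrow> nat \<Rightarrow> nat" where
  "tot P c = (\<Sum>v\<leftarrow>P. pos v c)"

lemma lin_len: "linorder_vote m v \<Longrightarrow> length v = m"
  unfolding linorder_vote_def using distinct_card by fastforce

lemma lin_pos: "linorder_vote m v \<Longrightarrow> c < m \<Longrightarrow> pos v c < m"
  using pos_less lin_len unfolding linorder_vote_def by fastforce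

lemma score_tot:
  assumes "\<forall>v\<in>set P. linorder_vote m v" "c < m"
  shows "borda_score m P c + tot P c = length P * (m - 1)"
  using assms
proof (induction P)
  case Nil then show ?case by (simp add: borda_score_def tot_def)
next
  case (Cons v P)
  have "pos v c < m" using Cons lin_pos by auto
  then show ?case using Cons by (auto simp: borda_score_def tot_def)
qed

lemma winner_props:
  assumes "\<forall>v\<in>set P. linorder_vote m v" "0 < m"
  defines "c \<equiv> borda_winner m P"
  shows "c < m \<and> (\<forall>d<m. tot P c \<le> tot P d) \<and> (\<forall>d<m. tot P d = tot P c \<longrightarrow> c \<le> d)"
proof -
  let ?s = "borda_score m P"
  let ?Q = "\<lambda>c. c < m \<and> (\<forall>d<m. ?s d \<le> ?s c)"
  define M where "M = Max (?s ` {..<m})"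
  have "M \<in> ?s ` {..<m}" unfolding M_def using assms(2) by (intro Max_in) auto
  then obtain e where e: "e < m" "?s e = M" by auto
  have "?Q e" using e M_def by auto
  then have Qc: "?Q c" unfolding c_def borda_winner_def by (rule LeastI)
  have st: "\<And>d. d < m \<Longrightarrow> ?s d + tot P d = length P * (m - 1)"
    using score_tot assms(1) by blast
  have 1: "\<forall>d<m. tot P c \<le> tot P d"
  proof (intro allI impI)
    fix d assume "d < m"
    then show "tot P c \<le> tot P d" using Qc st[of d] st[of c] by force
  qed
  have 2: "\<forall>d<m. tot P d = tot P c \<longrightarrow> c \<le> d"
  proof (intro allI impI)
    fix d assume d: "d < m" "tot P d = tot P c"
    have "?Q d" using d Qc st[of d] st[of c] by force
    then show "c \<le> d" unfolding c_def borda_winner_def by (rule Least_le)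
  qed
  show ?thesis using Qc 1 2 by blast
qed

lemma setup_facts:
  assumes lVM: "linorder_vote m VM" and lU: "linorder_vote m U" and ne: "U \<noteq> VM"
  obtains k H a b rest where
   "k < m" "length H = k" "a < m" "b < m" "a \<noteq> b" "a \<notin> set H" "b \<notin> set H"
   "pos VM a = k" "pos U b = k"
   "\<forall>c\<in>set H. pos VM c = pos H c \<and> pos U c = pos H c \<and> pos H c < k"
   "\<forall>c<m. c \<notin> set H \<longrightarrow> c \<noteq> a \<longrightarrow> k+1 \<le> pos VM c"
   "\<forall>c<m. c \<notin> set H \<longrightarrow> c \<noteq> b \<longrightarrow> k+1 \<le> pos U c"
   "distinct H" "distinct rest" "set rest = {c. c<m \<and> c \<notin> set H \<and> c \<noteq> a \<and> c \<noteq> b}"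
   "set H \<subseteq> {..<m}"
proof -
  have lenV: "length VM = m" and lenU: "length U = m" using lVM lU lin_len by auto
  have dV: "distinct VM" "set VM = {0..<m}" and dU: "distinct U" "set U = {0..<m}"
    using lVM lU unfolding linorder_vote_def by auto
  have ex: "\<exists>i. i<m \<and> VM!i \<noteq> U!i"
  proof (rule ccontr)
    assume "\<not> ?thesis"
    then have "U = VM" using lenV lenU by (intro nth_equalityI) auto
    then show False using ne by simp
  qed
  define k where "k = (LEAST i. i<m \<and> VM!i \<noteq> U!i)"
  have k: "k < m" "VM!k \<noteq> U!k" using LeastI_ex[OF ex] unfolding k_def by auto
  have before: "\<And>i. i < k \<Longrightarrow> VM!i = U!i"
    using not_less_Least k(1) unfolding k_def by fastforce
  define H where "H = take k VM"
  have HU: "H = take k U" unfolding H_def using before k(1) lenV lenU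
    by (intro nth_equalityI) auto
  have lenH: "length H = k" unfolding H_def using k lenV by simp
  have VMs: "VM = H @ drop k VM" unfolding H_def by simp
  have Us: "U = H @ drop k U" unfolding HU by simp
  define a where "a = VM!k"
  define b where "b = U!k"
  have posH: "\<forall>c\<in>set H. pos VM c = pos H c \<and> pos U c = pos H c \<and> pos H c < k"
  proof
    fix c assume c: "c \<in> set H"
    have "pos VM c = pos H c" using VMs c pos_append by metis
    moreover have "pos U c = pos H c" using Us c pos_append by metis
    moreover have "pos H c < k" using pos_less c lenH by blast
    ultimately show "pos VM c = pos H c \<and> pos U c = pos H c \<and> pos H c < k" by blast
  qed
  have pa: "pos VM a = k" unfolding a_def using nth_pos dV k lenV by auto
  have pb: "pos U b = k" unfolding b_def using nth_pos dU k lenU by auto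
  have aH: "a \<notin> set H" using posH pa by fastforce
  have bH: "b \<notin> set H" using posH pb by fastforce
  have am: "a < m" and bm: "b < m" unfolding a_def b_def using k lenV lenU dV dU nth_mem
    by (metis atLeastLessThan_iff)+
  have ab: "a \<noteq> b" using k a_def b_def by simp
  have geV: "\<forall>c<m. c \<notin> set H \<longrightarrow> c \<noteq> a \<longrightarrow> k+1 \<le> pos VM c"
  proof (intro allI impI)
    fix c assume c: "c < m" "c \<notin> set H" "c \<noteq> a"
    have cin: "c \<in> set VM" using c dV by auto
    have "pos VM c = length H + pos (drop k VM) c" using VMs c pos_append by metis
    moreover have "pos VM c \<noteq> k" using pos_nth[OF cin] c a_def by metis
    ultimately show "k+1 \<le> pos VM c" using lenH by simp
  qed
  have geU: "\<forall>c<m. c \<notin> set H \<longrightarrow> c \<noteq> b \<longrightarrow> k+1 \<le> pos U c"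
  proof (intro allI impI)
    fix c assume c: "c < m" "c \<notin> set H" "c \<noteq> b"
    have cin: "c \<in> set U" using c dU by auto
    have "pos U c = length H + pos (drop k U) c" using Us c pos_append by metis
    moreover have "pos U c \<noteq> k" using pos_nth[OF cin] c b_def by metis
    ultimately show "k+1 \<le> pos U c" using lenH by simp
  qed
  define rest where "rest = filter (\<lambda>c. c \<notin> set H \<and> c \<noteq> a \<and> c \<noteq> b) VM"
  have dr: "distinct rest" unfolding rest_def using dV by simp
  have sr: "set rest = {c. c<m \<and> c \<notin> set H \<and> c \<noteq> a \<and> c \<noteq> b}"
    unfolding rest_def using dV by auto
  have dH: "distinct H" unfolding H_def using dV by simp
  have sH: "set H \<subseteq> {..<m}" unfolding H_def using dV set_take_subset by fastforce
  show ?thesis by (rule that[OF k(1) lenH am bm ab aH bH pa pb posH geV geU dH dr sr sH])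
qed

lemma w_facts:
  assumes "length H = k" "distinct H" "distinct rest"
    "set rest = {c. c<m \<and> c \<notin> set H \<and> c \<noteq> a \<and> c \<noteq> b}"
    "set H \<subseteq> {..<m}" "a < m" "b < m" "a \<noteq> b" "a \<notin> set H" "b \<notin> set H"
    "\<forall>c\<in>set H. pos H c < k"
    and xy: "(x = a \<and> y = b) \<or> (x = b \<and> y = a)"
  defines "w \<equiv> x # y # rest @ rev H"
  shows "linorder_vote m w" "pos w x = 0" "pos w y = 1" "\<forall>c\<in>set rest. 2 \<le> pos w c"
    "\<forall>c\<in>set H. pos w c + pos H c = length rest + k + 1"
    "\<forall>c<m. c \<in> set H \<or> c = a \<or> c = b \<or> c \<in> set rest"
proof -
  show "linorder_vote m w" unfolding linorder_vote_def w_def using assms by auto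
  show "pos w x = 0" unfolding w_def by simp
  show "pos w y = 1" unfolding w_def using xy assms by auto
  show "\<forall>c\<in>set rest. 2 \<le> pos w c"
  proof
    fix c assume c: "c \<in> set rest"
    then have "c \<noteq> x" "c \<noteq> y" using xy assms by auto
    then show "2 \<le> pos w c" unfolding w_def by simp
  qed
  show "\<forall>c\<in>set H. pos w c + pos H c = length rest + k + 1"
  proof
    fix c assume c: "c \<in> set H"
    then have "c \<noteq> x" "c \<noteq> y" "c \<notin> set rest" using xy assms by auto
    then have "pos w c = 2 + (length rest + pos (rev H) c)" unfolding w_def by (simp add: pos_append)
    moreover have "pos (rev H) c = length H - 1 - pos H c" using pos_rev assms c by blast
    moreover have "pos H c < k" using assms c by blast
    ultimately show "pos w c + pos H c = length rest + k + 1" using assms by simp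
  qed
  show "\<forall>c<m. c \<in> set H \<or> c = a \<or> c = b \<or> c \<in> set rest" using assms by auto
qed

lemma winner_cong:
  assumes "\<forall>v\<in>set P. linorder_vote m v" "\<forall>v\<in>set Q. linorder_vote m v"
    "\<forall>c<m. \<forall>d<m. (tot P c \<le> tot P d \<longleftrightarrow> tot Q c \<le> tot Q d)"
  shows "borda_winner m P = borda_winner m Q"
proof -
  have "\<And>c d. c < m \<Longrightarrow> d < m \<Longrightarrow>
      (borda_score m P d \<le> borda_score m P c \<longleftrightarrow> borda_score m Q d \<le> borda_score m Q c)"
  proof -
    fix c d assume cd: "c < m" "d < m"
    have "borda_score m P d \<le> borda_score m P c \<longleftrightarrow> tot P c \<le> tot P d"
      using score_tot[OF assms(1) cd(1)] score_tot[OF assms(1) cd(2)] by linarith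
    moreover have "borda_score m Q d \<le> borda_score m Q c \<longleftrightarrow> tot Q c \<le> tot Q d"
      using score_tot[OF assms(2) cd(1)] score_tot[OF assms(2) cd(2)] by linarith
    ultimately show "borda_score m P d \<le> borda_score m P c \<longleftrightarrow> borda_score m Q d \<le> borda_score m Q c"
      using assms(3) cd by blast
  qed
  then have "\<And>c. (c < m \<and> (\<forall>d<m. borda_score m P d \<le> borda_score m P c)) =
                  (c < m \<and> (\<forall>d<m. borda_score m Q d \<le> borda_score m Q c))" by blast
  then show ?thesis unfolding borda_winner_def by simp
qed

lemma tot_append: "tot (xs @ ys) c = tot xs c + tot ys c"
  by (simp add: tot_def)

lemma tot_cons: "tot (v # xs) c = pos v c + tot xs c"
  by (simp add: tot_def)

lemma tot_rep: "tot (concat (replicate j L)) c = j * tot L c"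
  by (induction j) (auto simp: tot_append tot_def)

lemma pair_tot:
  assumes "linorder_vote m VM" "c < m"
  shows "tot [VM, rev VM] c = m - 1"
proof -
  have "c \<in> set VM" "distinct VM" "length VM = m" using assms lin_len unfolding linorder_vote_def by auto
  then show ?thesis using pos_rev pos_less by (fastforce simp: tot_def)
qed

lemma tot2: "tot [V, w] c = pos V c + pos w c"
  by (simp add: tot_def)

lemma core_odd:
  assumes lVM: "linorder_vote m VM" and lU: "linorder_vote m U" and ne: "U \<noteq> VM"
  shows "\<exists>w. linorder_vote m w \<and> pos VM (borda_winner m [VM, w]) < pos VM (borda_winner m [U, w])"
proof -
  obtain k H a b rest where k: "k < m" and lenH: "length H = k" and am: "a < m" and bm: "b < m"
    and ab: "a \<noteq> b" and aH: "a \<notin> set H" and bH: "b \<notin> set H"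
    and pa: "pos VM a = k" and pb: "pos U b = k"
    and posH: "\<forall>c\<in>set H. pos VM c = pos H c \<and> pos U c = pos H c \<and> pos H c < k"
    and geV: "\<forall>c<m. c \<notin> set H \<longrightarrow> c \<noteq> a \<longrightarrow> k+1 \<le> pos VM c"
    and geU: "\<forall>c<m. c \<notin> set H \<longrightarrow> c \<noteq> b \<longrightarrow> k+1 \<le> pos U c"
    and dH: "distinct H" and dr: "distinct rest"
    and sr: "set rest = {c. c<m \<and> c \<notin> set H \<and> c \<noteq> a \<and> c \<noteq> b}"
    and sH: "set H \<subseteq> {..<m}"
    by (rule setup_facts[OF lVM lU ne])
  have m0: "0 < m" using k by simp
  have posH': "\<forall>c\<in>set H. pos H c < k" using posH by blast
  have pVb: "k+1 \<le> pos VM b" using geV bm bH ab by blast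
  have pUa: "k+1 \<le> pos U a" using geU am aH ab by blast
  have restV: "\<forall>c\<in>set rest. k+1 \<le> pos VM c" using geV sr by auto
  have restU: "\<forall>c\<in>set rest. k+1 \<le> pos U c" using geU sr by auto
  define r where "r = length rest"
  show ?thesis
  proof (cases "(r > 0 \<and> b < a) \<or> (r = 0 \<and> b = 0)")
    case True
    define w where "w = a # b # rest @ rev H"
    note W = w_facts[OF lenH dH dr sr sH am bm ab aH bH posH', of a b, OF disjI1[OF conjI[OF refl refl]], folded w_def]
    have vw: "\<forall>v\<in>set [VM, w]. linorder_vote m v" "\<forall>v\<in>set [U, w]. linorder_vote m v"
      using W lVM lU by auto
    define cV where "cV = borda_winner m [VM, w]"
    define cU where "cU = borda_winner m [U, w]"
    have PV: "cV < m" "\<forall>d<m. tot [VM, w] cV \<le> tot [VM, w] d"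
      using winner_props[OF vw(1) m0] unfolding cV_def by blast+
    have PU: "cU < m" "\<forall>d<m. tot [U, w] cU \<le> tot [U, w] d"
        "\<forall>d<m. tot [U, w] d = tot [U, w] cU \<longrightarrow> cU \<le> d"
      using winner_props[OF vw(2) m0] unfolding cU_def by blast+
    have TVa: "tot [VM, w] a = k" using W pa by (simp add: tot2)
    have TV: "\<forall>d<m. d \<noteq> a \<longrightarrow> k+1 \<le> tot [VM, w] d"
    proof (intro allI impI)
      fix d assume d: "d < m" "d \<noteq> a"
      consider "d \<in> set H" | "d = b" | "d \<in> set rest" using W(6) d by blast
      then show "k+1 \<le> tot [VM, w] d"
      proof cases
        case 1 then show ?thesis using W(5) posH by (fastforce simp: tot2 r_def)
      next
        case 2 then show ?thesis using W pVb by (simp add: tot2)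
      next
        case 3 then show ?thesis using W(4) restV by (fastforce simp: tot2)
      qed
    qed
    have cVa: "cV = a"
      using PV TV TVa am by (metis Suc_eq_plus1 not_less_eq_eq)
    have TUb: "tot [U, w] b = k+1" using W pb by (simp add: tot2)
    have TU: "\<forall>d<m. d \<noteq> b \<longrightarrow> k+1 \<le> tot [U, w] d \<and> (tot [U, w] d = k+1 \<longrightarrow> b \<le> d)"
    proof (intro allI impI)
      fix d assume d: "d < m" "d \<noteq> b"
      consider "d \<in> set H" | "d = a" | "d \<in> set rest" using W(6) d by blast
      then show "k+1 \<le> tot [U, w] d \<and> (tot [U, w] d = k+1 \<longrightarrow> b \<le> d)"
      proof cases
        case 1
        then have "tot [U, w] d = r + k + 1" using W(5) posH by (fastforce simp: tot2 r_def)
        then show ?thesis using True by auto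
      next
        case 2 then show ?thesis using W pUa True by (auto simp: tot2)
      next
        case 3 then show ?thesis using W(4) restU by (fastforce simp: tot2)
      qed
    qed
    have cUb: "cU = b"
    proof (rule ccontr)
      assume nb: "cU \<noteq> b"
      have "tot [U, w] cU \<le> k+1" using PU(2) bm TUb by metis
      moreover have "k+1 \<le> tot [U, w] cU" using TU PU(1) nb by blast
      ultimately have eq: "tot [U, w] cU = k+1" by simp
      then have "b \<le> cU" using TU PU(1) nb by blast
      moreover have "cU \<le> b" using PU(3) bm eq TUb by metis
      ultimately show False using nb by simp
    qed
    show ?thesis using W(1) cVa cUb pa pVb unfolding cV_def cU_def by auto
  next
    case False
    define w where "w = b # a # rest @ rev H"
    note W = w_facts[OF lenH dH dr sr sH am bm ab aH bH posH', of b a, OF disjI2[OF conjI[OF refl refl]], folded w_def]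
    have vw: "\<forall>v\<in>set [VM, w]. linorder_vote m v" "\<forall>v\<in>set [U, w]. linorder_vote m v"
      using W lVM lU by auto
    define cV where "cV = borda_winner m [VM, w]"
    define cU where "cU = borda_winner m [U, w]"
    have PV: "cV < m" "\<forall>d<m. tot [VM, w] cV \<le> tot [VM, w] d"
        "\<forall>d<m. tot [VM, w] d = tot [VM, w] cV \<longrightarrow> cV \<le> d"
      using winner_props[OF vw(1) m0] unfolding cV_def by blast+
    have PU: "cU < m" "\<forall>d<m. tot [U, w] cU \<le> tot [U, w] d"
      using winner_props[OF vw(2) m0] unfolding cU_def by blast+
    have TUb: "tot [U, w] b = k" using W pb by (simp add: tot2)
    have TU: "\<forall>d<m. d \<noteq> b \<longrightarrow> k+1 \<le> tot [U, w] d"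
    proof (intro allI impI)
      fix d assume d: "d < m" "d \<noteq> b"
      consider "d \<in> set H" | "d = a" | "d \<in> set rest" using W(6) d by blast
      then show "k+1 \<le> tot [U, w] d"
      proof cases
        case 1 then show ?thesis using W(5) posH by (fastforce simp: tot2 r_def)
      next
        case 2 then show ?thesis using W pUa by (simp add: tot2)
      next
        case 3 then show ?thesis using W(4) restU by (fastforce simp: tot2)
      qed
    qed
    have cUb: "cU = b"
      using PU TU TUb bm by (metis Suc_eq_plus1 not_less_eq_eq)
    have TVa: "tot [VM, w] a = k+1" using W pa by (simp add: tot2)
    have TVH: "\<forall>d\<in>set H. tot [VM, w] d = r + k + 1"
      using W(5) posH by (fastforce simp: tot2 r_def)
    have TVr: "\<forall>d\<in>set rest. k+3 \<le> tot [VM, w] d"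
      using W(4) restV by (fastforce simp: tot2)
    have cVle: "tot [VM, w] cV \<le> k+1" using PV(2) am TVa by metis
    have cVb: "cV \<noteq> b"
    proof
      assume cb: "cV = b"
      show False
      proof (cases "r = 0")
        case True
        then have b0: "b \<noteq> 0" using False by auto
        have "rest = []" using True r_def by simp
        then have "0 \<in> set H \<or> 0 = a" using W(6) m0 b0 by auto
        then have "tot [VM, w] 0 = k+1" using TVH TVa True by auto
        moreover have "tot [VM, w] cV \<ge> k+1" using cb pVb by (simp add: tot2)
        ultimately have "cV \<le> 0" using PV(3) m0 cVle by (metis le_antisym)
        then show False using cb b0 by simp
      next
        case r: False
        then have "a < b" using False ab by auto
        have "tot [VM, w] cV \<ge> k+1" using cb pVb by (simp add: tot2)
        then have "cV \<le> a" using PV(3) am cVle TVa by (metis le_antisym)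
        then show False using cb \<open>a < b\<close> by simp
      qed
    qed
    have cVin: "cV \<in> set H \<or> cV = a"
      using W(6) PV(1) cVb TVr cVle by fastforce
    have "pos VM cV \<le> k" using cVin posH pa by fastforce
    then show ?thesis using W(1) cUb pVb unfolding cV_def cU_def by auto
  qed
qed

lemma tot3: "tot [V, w, x] c = pos V c + pos w c + pos x c"
  by (simp add: tot_def)

lemma core_even:
  assumes lVM: "linorder_vote m VM" and lU: "linorder_vote m U" and ne: "U \<noteq> VM"
  shows "\<exists>w. linorder_vote m w \<and>
     pos VM (borda_winner m [VM, w, rev VM]) < pos VM (borda_winner m [U, w, rev VM])"
proof -
  obtain k H a b rest where k: "k < m" and lenH: "length H = k" and am: "a < m" and bm: "b < m"
    and ab: "a \<noteq> b" and aH: "a \<notin> set H" and bH: "b \<notin> set H"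
    and pa: "pos VM a = k" and pb: "pos U b = k"
    and posH: "\<forall>c\<in>set H. pos VM c = pos H c \<and> pos U c = pos H c \<and> pos H c < k"
    and geV: "\<forall>c<m. c \<notin> set H \<longrightarrow> c \<noteq> a \<longrightarrow> k+1 \<le> pos VM c"
    and geU: "\<forall>c<m. c \<notin> set H \<longrightarrow> c \<noteq> b \<longrightarrow> k+1 \<le> pos U c"
    and dH: "distinct H" and dr: "distinct rest"
    and sr: "set rest = {c. c<m \<and> c \<notin> set H \<and> c \<noteq> a \<and> c \<noteq> b}"
    and sH: "set H \<subseteq> {..<m}"
    by (rule setup_facts[OF lVM lU ne])
  have m0: "0 < m" using k by simp
  have posH': "\<forall>c\<in>set H. pos H c < k" using posH by blast
  have pVb: "k+1 \<le> pos VM b" using geV bm bH ab by blast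
  have pUa: "k+1 \<le> pos U a" using geU am aH ab by blast
  have lrev: "linorder_vote m (rev VM)" using lVM unfolding linorder_vote_def by simp
  have prev: "\<And>c. c < m \<Longrightarrow> pos (rev VM) c = m - 1 - pos VM c"
    using lVM pos_rev lin_len unfolding linorder_vote_def by fastforce
  have pVm: "\<And>c. c < m \<Longrightarrow> pos VM c < m" using lin_pos lVM by blast
  define w where "w = a # b # rest @ rev H"
  note W = w_facts[OF lenH dH dr sr sH am bm ab aH bH posH', of a b, OF disjI1[OF conjI[OF refl refl]], folded w_def]
  have w1: "\<forall>d<m. d \<noteq> a \<longrightarrow> 1 \<le> pos w d"
  proof (intro allI impI)
    fix d assume d: "d < m" "d \<noteq> a"
    consider "d \<in> set H" | "d = b" | "d \<in> set rest" using W(6) d by blast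
    then show "1 \<le> pos w d"
    proof cases
      case 1 then show ?thesis using W(5) posH' by fastforce
    next
      case 2 then show ?thesis using W by simp
    next
      case 3 then show ?thesis using W(4) by fastforce
    qed
  qed
  have vw: "\<forall>v\<in>set [VM, w, rev VM]. linorder_vote m v" "\<forall>v\<in>set [U, w, rev VM]. linorder_vote m v"
    using W lVM lU lrev by auto
  define cV where "cV = borda_winner m [VM, w, rev VM]"
  define cU where "cU = borda_winner m [U, w, rev VM]"
  have PV: "cV < m" "\<forall>d<m. tot [VM, w, rev VM] cV \<le> tot [VM, w, rev VM] d"
    using winner_props[OF vw(1) m0] unfolding cV_def by blast+
  have PU: "cU < m" "\<forall>d<m. tot [U, w, rev VM] cU \<le> tot [U, w, rev VM] d"
    using winner_props[OF vw(2) m0] unfolding cU_def by blast+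
  have TV: "\<And>d. d < m \<Longrightarrow> tot [VM, w, rev VM] d = m - 1 + pos w d"
    using prev pVm by (fastforce simp: tot3)
  have cVa: "cV = a"
  proof (rule ccontr)
    assume "cV \<noteq> a"
    then have "1 \<le> pos w cV" using w1 PV(1) by blast
    moreover have "tot [VM, w, rev VM] cV \<le> tot [VM, w, rev VM] a" using PV(2) am by blast
    ultimately show False using TV[OF am] TV[OF PV(1)] W(2) by simp
  qed
  have TUb: "tot [U, w, rev VM] b \<le> m - 1"
    using W(3) pb prev[OF bm] pVb pVm[OF bm] by (simp add: tot3)
  have cUle: "tot [U, w, rev VM] cU \<le> m - 1" using PU(2) bm TUb by (meson order_trans)
  have cUH: "cU \<notin> set H"
  proof
    assume h: "cU \<in> set H"
    then have "cU \<noteq> a" using aH by blast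
    then have "1 \<le> pos w cU" using w1 PU(1) by blast
    moreover have "pos U cU = pos VM cU" using posH h by simp
    ultimately show False using cUle prev[OF PU(1)] pVm[OF PU(1)] by (simp add: tot3)
  qed
  have cUa: "cU \<noteq> a"
  proof
    assume h: "cU = a"
    show False using cUle h prev[OF am] pa pUa W(2) k by (simp add: tot3)
  qed
  have "k+1 \<le> pos VM cU" using geV PU(1) cUH cUa by blast
  then show ?thesis using W(1) cVa pa unfolding cV_def cU_def by auto
qed

lemma pad:
  assumes lVM: "linorder_vote m VM" and Q: "\<forall>v\<in>set Q. linorder_vote m v"
  shows "borda_winner m (Q @ concat (replicate j [VM, rev VM])) = borda_winner m Q"
proof (rule winner_cong)
  have lrev: "linorder_vote m (rev VM)" using lVM unfolding linorder_vote_def by simp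
  show "\<forall>v\<in>set (Q @ concat (replicate j [VM, rev VM])). linorder_vote m v"
    using Q lVM lrev by auto
  show "\<forall>v\<in>set Q. linorder_vote m v" by (rule Q)
  show "\<forall>c<m. \<forall>d<m. (tot (Q @ concat (replicate j [VM, rev VM])) c
       \<le> tot (Q @ concat (replicate j [VM, rev VM])) d) = (tot Q c \<le> tot Q d)"
    using pair_tot[OF lVM] by (simp add: tot_append tot_rep)
qed

lemma len_pairs: "length (concat (replicate j [x, y])) = 2 * j"
  by (induction j) auto

lemma set_pairs: "set (concat (replicate j [x, y])) \<subseteq> {x, y}"
  by (induction j) auto

theorem theorem2:
  fixes m n :: nat and VM U :: "nat list"
  assumes "n \<ge> 1"
    and "linorder_vote m VM"
    and "linorder_vote m U"
  shows "\<not> dominates m (all_profiles m n) VM U VM"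
proof
  assume D: "dominates m (all_profiles m n) VM U VM"
  have ne: "U \<noteq> VM" using D unfolding dominates_def by auto
  have lrev: "linorder_vote m (rev VM)" using assms(2) unfolding linorder_vote_def by simp
  have "\<exists>P\<in>all_profiles m n. pos VM (borda_winner m (VM # P)) < pos VM (borda_winner m (U # P))"
  proof (cases "odd n")
    case True
    then obtain j where n: "n = 2 * j + 1" using oddE by blast
    obtain w where w: "linorder_vote m w"
      "pos VM (borda_winner m [VM, w]) < pos VM (borda_winner m [U, w])"
      using core_odd[OF assms(2,3) ne] by blast
    define P where "P = w # concat (replicate j [VM, rev VM])"
    have "P \<in> all_profiles m n" unfolding all_profiles_def P_def
      using n w(1) assms(2) lrev len_pairs[of j VM "rev VM"] set_pairs[of j VM "rev VM"] by auto
    moreover have "borda_winner m (VM # P) = borda_winner m [VM, w]"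
      using pad[OF assms(2), of "[VM, w]" j] assms(2) w(1) unfolding P_def by simp
    moreover have "borda_winner m (U # P) = borda_winner m [U, w]"
      using pad[OF assms(2), of "[U, w]" j] assms(3) w(1) unfolding P_def by simp
    ultimately show ?thesis using w(2) by (intro bexI[where x=P]) simp_all
  next
    case False
    have "n = 2 * (n div 2 - 1) + 2" using False assms(1) by presburger
    then obtain j where n: "n = 2 * j + 2" by blast
    obtain w where w: "linorder_vote m w"
      "pos VM (borda_winner m [VM, w, rev VM]) < pos VM (borda_winner m [U, w, rev VM])"
      using core_even[OF assms(2,3) ne] by blast
    define P where "P = w # rev VM # concat (replicate j [VM, rev VM])"
    have "P \<in> all_profiles m n" unfolding all_profiles_def P_def
      using n w(1) assms(2) lrev len_pairs[of j VM "rev VM"] set_pairs[of j VM "rev VM"] by auto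
    moreover have "borda_winner m (VM # P) = borda_winner m [VM, w, rev VM]"
      using pad[OF assms(2), of "[VM, w, rev VM]" j] assms(2) w(1) lrev unfolding P_def by simp
    moreover have "borda_winner m (U # P) = borda_winner m [U, w, rev VM]"
      using pad[OF assms(2), of "[U, w, rev VM]" j] assms(3) w(1) lrev unfolding P_def by simp
    ultimately show ?thesis using w(2) by (intro bexI[where x=P]) simp_all
  qed
  then obtain P where "P \<in> all_profiles m n"
    "pos VM (borda_winner m (VM # P)) < pos VM (borda_winner m (U # P))" by blast
  then show False using D unfolding dominates_def by fastforce
qed

end
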